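(* Let $F_{ij}$ ($0\le i\le m$, $0\le j\le n$) be a dual-convex $m\times n$ net in $I^3$ with faces $p_{kl}$ and metric dual $p^*_{kl}=(p^1_{kl},p^2_{kl},p^3_{kl})$, $0\le k<m$, $0\le l<n$. A collection $C_{kl}\in\mathbb{R}^3$ ($0\le k<m$, $0\le l<n$) is reciprocal-parallel to $F_{ij}$ if and only if $C_{kl}=(-c^2_{kl},c^1_{kl},h_{kl})$ for all $k,l$, where $c^*_{kl}=(c^1_{kl},c^2_{kl},c^3_{kl})$ is a collection of points, not all equal, Christoffel dual to $p^*_{kl}$, and the real numbers $h_{kl}$ satisfy, for all adjacent index pairs $(k,l),(k',l')$, $$h_{kl}-h_{k'l'}=(c^1_{kl}-c^1_{k'l'})\,p^2_{kl}-(c^2_{kl}-c^2_{k'l'})\,p^1_{kl}.$$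
   Context: $I^3$ is $\mathbb{R}^3$ with coordinates $(x,y,z)$; isotropic = parallel to the $z$-axis. Metric duality: non-isotropic plane $z=P^1x+P^2y-P^3$ $\leftrightarrow$ point $(P^1,P^2,P^3)$. An $m\times n$ net: points $F_{ij}$, $0\le i\le m,0\le j\le n$, with $F_{ij},F_{i+1,j},F_{i+1,j+1},F_{i,j+1}$ consecutive vertices of a convex planar quadrilateral (face $p_{ij}$) for all $0\le i<m,0\le j<n$. Boundary vertices: $i\in\{0,m\}$ or $j\in\{0,n\}$; consecutive faces around non-boundary $F_{ij}$: $p_{i-1,j-1},p_{i,j-1},p_{ij},p_{i-1,j}$. Convex 4-hedral angle with vertex $O$: union of rays from $O$ meeting a convex quadrilateral in a plane not through $O$; flat angles: rays through one side; admissible: isotropic line through $O$ meets its interior. Dual-convex: $m,n\ge2$ and at each non-boundary vertex the four consecutive face planes are planes of four consecutive flat angles of an admissible convex 4-hedral angle. The metric dual of a dual-convex net is the $(m-1)\times(n-1)$ net of points $p^*_{kl}$ dual to the face planes. A collection $C_{kl}$, $0\le k<m$, $0\le l<n$, not all equal, is reciprocal-parallel to $F_{ij}$ if $C_{i,j-1}C_{ij}\parallel F_{i+1,j}F_{ij}$ for all $0\le i<m,0<j<n$ and $C_{i-1,j}C_{ij}\parallel F_{i,j+1}F_{ij}$ for all $0<i<m,0\le j<n$. Index pairs are adjacent if they differ by $1$ in exactly one coordinate. Labeled quadrilaterals $ABCD$, $A'B'C'D'$ are dual if $AB\parallel A'B'$, $BC\parallel B'C'$, $CD\parallel C'D'$,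 $DA\parallel D'A'$, $AC\parallel B'D'$, $BD\parallel A'C'$; two collections indexed alike are Christoffel dual if corresponding faces (quadrilaterals on indices $(k,l),(k+1,l),(k+1,l+1),(k,l+1)$) are dual. *)

theory Defs
  imports "HOL-Analysis.Analysis"
begin

type_synonym pt = "real^3"

definition par :: "pt \<Rightarrow> pt \<Rightarrow> bool" where
  "par u v \<longleftrightarrow> collinear {0, u, v}"

definition convex_quad :: "pt \<Rightarrow> pt \<Rightarrow> pt \<Rightarrow> pt \<Rightarrow> bool" where
  "convex_quad A B C D \<longleftrightarrow> \<not> collinear {A, B, C, D} \<and> open_segment A C \<inter> open_segment B D \<noteq> {}"

definition is_net :: "(nat \<Rightarrow> nat \<Rightarrow> pt) \<Rightarrow> nat \<Rightarrow> nat \<Rightarrow> bool" where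
  "is_net F m n \<longleftrightarrow> (\<forall>i<m. \<forall>j<n. convex_quad (F i j) (F (Suc i) j) (F (Suc i) (Suc j)) (F i (Suc j)))"

definition face_plane :: "(nat \<Rightarrow> nat \<Rightarrow> pt) \<Rightarrow> nat \<Rightarrow> nat \<Rightarrow> pt set" where
  "face_plane F k l = affine hull {F k l, F (Suc k) l, F (Suc k) (Suc l), F k (Suc l)}"

definition isotropic_dir :: pt where
  "isotropic_dir = vector [0, 0, 1]"

definition hedral_angle :: "pt \<Rightarrow> pt \<Rightarrow> pt \<Rightarrow> pt \<Rightarrow> pt \<Rightarrow> pt set" where
  "hedral_angle V A B C D = {V + t *\<^sub>R (x - V) | t x. t \<ge> 0 \<and> x \<in> convex hull {A, B, C, D}}"

definition admissible_angle :: "pt \<Rightarrow> pt \<Rightarrow> pt \<Rightarrow> pt \<Rightarrow> pt \<Rightarrow> bool" where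
  "admissible_angle V A B C D \<longleftrightarrow> convex_quad A B C D \<and> V \<notin> affine hull {A, B, C, D} \<and>
     (\<exists>s. V + s *\<^sub>R isotropic_dir \<in> interior (hedral_angle V A B C D))"

text \<open>The consecutive faces around non-boundary F_ij are
  p_{i-1,j-1}, p_{i,j-1}, p_ij, p_{i-1,j}; their planes are the planes of the four
  consecutive flat angles (spanned by V and the sides AB, BC, CD, DA).\<close>
definition dual_convex :: "(nat \<Rightarrow> nat \<Rightarrow> pt) \<Rightarrow> nat \<Rightarrow> nat \<Rightarrow> bool" where
  "dual_convex F m n \<longleftrightarrow> is_net F m n \<and> 2 \<le> m \<and> 2 \<le> n \<and>
     (\<forall>i j. 0 < i \<and> i < m \<and> 0 < j \<and> j < n \<longrightarrow>
        (\<exists>V A B C D. admissible_angle V A B C D \<and>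
           face_plane F (i - 1) (j - 1) = affine hull {V, A, B} \<and>
           face_plane F i (j - 1) = affine hull {V, B, C} \<and>
           face_plane F i j = affine hull {V, C, D} \<and>
           face_plane F (i - 1) j = affine hull {V, D, A}))"

text \<open>Metric duality: non-isotropic plane z = P1 x + P2 y - P3 corresponds to point (P1,P2,P3).\<close>
definition dual_point :: "pt set \<Rightarrow> pt" where
  "dual_point S = (THE P. S = {x. x$3 = P$1 * x$1 + P$2 * x$2 - P$3})"

definition metric_dual :: "(nat \<Rightarrow> nat \<Rightarrow> pt) \<Rightarrow> nat \<Rightarrow> nat \<Rightarrow> pt" where
  "metric_dual F k l = dual_point (face_plane F k l)"

definition not_all_equal :: "(nat \<Rightarrow> nat \<Rightarrow> 'a) \<Rightarrow> nat \<Rightarrow> nat \<Rightarrow> bool" where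
  "not_all_equal C m n \<longleftrightarrow> (\<exists>k l k' l'. k < m \<and> l < n \<and> k' < m \<and> l' < n \<and> C k l \<noteq> C k' l')"

definition reciprocal_parallel :: "(nat \<Rightarrow> nat \<Rightarrow> pt) \<Rightarrow> nat \<Rightarrow> nat \<Rightarrow> (nat \<Rightarrow> nat \<Rightarrow> pt) \<Rightarrow> bool" where
  "reciprocal_parallel F m n C \<longleftrightarrow> not_all_equal C m n \<and>
     (\<forall>i j. i < m \<and> 0 < j \<and> j < n \<longrightarrow> par (C i j - C i (j - 1)) (F i j - F (Suc i) j)) \<and>
     (\<forall>i j. 0 < i \<and> i < m \<and> j < n \<longrightarrow> par (C i j - C (i - 1) j) (F i j - F i (Suc j)))"

definition dual_quads :: "pt \<Rightarrow> pt \<Rightarrow> pt \<Rightarrow> pt \<Rightarrow> pt \<Rightarrow> pt \<Rightarrow> pt \<Rightarrow> pt \<Rightarrow> bool" where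
  "dual_quads A B C D A' B' C' D' \<longleftrightarrow>
     par (B - A) (B' - A') \<and> par (C - B) (C' - B') \<and> par (D - C) (D' - C') \<and>
     par (A - D) (A' - D') \<and> par (C - A) (D' - B') \<and> par (D - B) (C' - A')"

definition christoffel_dual :: "(nat \<Rightarrow> nat \<Rightarrow> pt) \<Rightarrow> (nat \<Rightarrow> nat \<Rightarrow> pt) \<Rightarrow> nat \<Rightarrow> nat \<Rightarrow> bool" where
  "christoffel_dual P Q m n \<longleftrightarrow> (\<forall>k l. Suc k < m \<and> Suc l < n \<longrightarrow>
     dual_quads (P k l) (P (Suc k) l) (P (Suc k) (Suc l)) (P k (Suc l))
                (Q k l) (Q (Suc k) l) (Q (Suc k) (Suc l)) (Q k (Suc l)))"

definition adjacent :: "nat \<times> nat \<Rightarrow> nat \<times> nat \<Rightarrow> bool" where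
  "adjacent a b \<longleftrightarrow> (fst a = fst b \<and> (snd a = Suc (snd b) \<or> snd b = Suc (snd a))) \<or>
                     (snd a = snd b \<and> (fst a = Suc (fst b) \<or> fst b = Suc (fst a)))"

end

theory Submission
  imports Defs
begin
lemma par_iff: "par u v \<longleftrightarrow> cross3 u v = 0"
  by (simp add: par_def cross_eq_0)

lemma scale_solve:
  fixes x w :: "'a::real_vector"
  assumes c: "c \<noteq> 0" and e: "c *\<^sub>R x = d *\<^sub>R w"
  shows "x = (d / c) *\<^sub>R w"
proof -
  have "x = inverse c *\<^sub>R (c *\<^sub>R x)" using c by simp
  also have "\<dots> = inverse c *\<^sub>R (d *\<^sub>R w)" using e by simp
  also have "\<dots> = (d / c) *\<^sub>R w" by (simp add: divide_inverse mult.commute)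
  finally show ?thesis .
qed

lemma inner3: "a \<bullet> b = a$1 * b$1 + a$2 * b$2 + a$3 * b$3" for a b :: "real^3"
  by (simp add: inner_vec_def sum_3)

lemma cross_zero_scale: "cross3 x w = 0 \<Longrightarrow> (w \<bullet> w) *\<^sub>R x = (x \<bullet> w) *\<^sub>R w"
proof -
  assume h: "cross3 x w = 0"
  have e1: "x$2 * w$3 - w$2 * x$3 = 0" "x$3 * w$1 - w$3 * x$1 = 0" "x$1 * w$2 - w$1 * x$2 = 0"
    using h cross_components[of x w] by simp_all
  have c1: "(w$1 * w$1 + w$2 * w$2 + w$3 * w$3) * x$1 - (x$1 * w$1 + x$2 * w$2 + x$3 * w$3) * w$1
     = w$2 * (x$1 * w$2 - w$1 * x$2) - w$3 * (x$3 * w$1 - w$3 * x$1)" by (simp add: algebra_simps)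
  have c2: "(w$1 * w$1 + w$2 * w$2 + w$3 * w$3) * x$2 - (x$1 * w$1 + x$2 * w$2 + x$3 * w$3) * w$2
     = w$3 * (x$2 * w$3 - w$2 * x$3) - w$1 * (x$1 * w$2 - w$1 * x$2)" by (simp add: algebra_simps)
  have c3: "(w$1 * w$1 + w$2 * w$2 + w$3 * w$3) * x$3 - (x$1 * w$1 + x$2 * w$2 + x$3 * w$3) * w$3
     = w$1 * (x$3 * w$1 - w$3 * x$1) - w$2 * (x$2 * w$3 - w$2 * x$3)" by (simp add: algebra_simps)
  show ?thesis unfolding vec_eq_iff forall_3 inner3
    using c1 c2 c3 e1 by simp
qed

lemma par_trans: "cross3 x w = 0 \<Longrightarrow> cross3 y w = 0 \<Longrightarrow> w \<noteq> 0 \<Longrightarrow> cross3 x y = 0"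
proof -
  assume a: "cross3 x w = 0" "cross3 y w = 0" "w \<noteq> 0"
  have ww: "w \<bullet> w \<noteq> 0" using a(3) by simp
  have "x = ((x \<bullet> w) / (w \<bullet> w)) *\<^sub>R w" using scale_solve[OF ww cross_zero_scale[OF a(1)]] .
  moreover have "y = ((y \<bullet> w) / (w \<bullet> w)) *\<^sub>R w" using scale_solve[OF ww cross_zero_scale[OF a(2)]] .
  ultimately show ?thesis by (metis cross_mult_left cross_mult_right cross_refl scaleR_zero_right)
qed

lemma perp2: "x \<bullet> N = 0 \<Longrightarrow> x \<bullet> M = 0 \<Longrightarrow> cross3 x (cross3 N M) = 0"
  by (simp add: Lagrange)

lemma plane_identity:
  fixes a b y :: "real^3"
  shows "((cross3 a b) \<bullet> (cross3 a b)) *\<^sub>R y = ((cross3 y b) \<bullet> (cross3 a b)) *\<^sub>R a + ((cross3 a y) \<bullet> (cross3 a b)) *\<^sub>R b + (y \<bullet> cross3 a b) *\<^sub>R cross3 a b"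
  by (simp add: cross3_simps forall_3) 

lemma Q1:
  assumes "convex_quad A B C D"
  shows "cross3 (B - A) (C - A) \<noteq> 0"
proof
  assume cr: "cross3 (B - A) (C - A) = 0"
  from assms obtain Q where O1: "Q \<in> open_segment A C" and O2: "Q \<in> open_segment B D"
    and nc: "\<not> collinear {A, B, C, D}" unfolding convex_quad_def by blast
  from O1 obtain s where AC: "A \<noteq> C" and s: "Q = (1 - s) *\<^sub>R A + s *\<^sub>R C" by (auto simp: in_segment)
  from O2 obtain t where t: "0 < t" "Q = (1 - t) *\<^sub>R B + t *\<^sub>R D" by (auto simp: in_segment)
  define w where "w = C - A"
  have "w \<noteq> 0" using AC unfolding w_def by auto
  then have w0: "w \<bullet> w \<noteq> 0" by simp
  define \<beta> where "\<beta> = ((B - A) \<bullet> w) / (w \<bullet> w)"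
  have Bw: "B = A + \<beta> *\<^sub>R w"
  proof -
    have "(w \<bullet> w) *\<^sub>R (B - A) = ((B - A) \<bullet> w) *\<^sub>R w" using cross_zero_scale cr w_def by blast
    then have "B - A = \<beta> *\<^sub>R w" unfolding \<beta>_def by (rule scale_solve[OF w0])
    then show ?thesis by (simp add: algebra_simps)
  qed
  have Cw: "C = A + 1 *\<^sub>R w" by (simp add: w_def)
  have Aw: "A = A + 0 *\<^sub>R w" by simp
  have Ow: "Q = A + s *\<^sub>R w" using s by (simp add: w_def algebra_simps)
  have "t *\<^sub>R D = Q - (1 - t) *\<^sub>R B" using t by (simp add: algebra_simps)
  also have "\<dots> = t *\<^sub>R A + (t * \<beta> + s - \<beta>) *\<^sub>R w" unfolding Ow Bw
    by (simp add: algebra_simps)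
  also have "\<dots> = t *\<^sub>R (A + (\<beta> + (s - \<beta>) / t) *\<^sub>R w)"
  proof -
    have "t * (\<beta> + (s - \<beta>) / t) = t * \<beta> + s - \<beta>" using t(1) by (simp add: field_simps)
    then show ?thesis by (simp add: scaleR_add_right)
  qed
  finally have Dw: "D = A + (\<beta> + (s - \<beta>) / t) *\<^sub>R w" using t(1) by simp
  have "collinear {A, B, C, D}" unfolding collinear_alt
  proof (rule exI[of _ A], rule exI[of _ w], intro ballI)
    fix x assume "x \<in> {A, B, C, D}"
    then have "x = A \<or> x = B \<or> x = C \<or> x = D" by simp
    then show "\<exists>c. x = A + c *\<^sub>R w"
    proof (elim disjE)
      assume "x = A" then show ?thesis by (intro exI[of _ 0]) simp
    next
      assume "x = B" then show ?thesis using Bw by (intro exI[of _ \<beta>]) simp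
    next
      assume "x = C" then show ?thesis using Cw by (intro exI[of _ 1]) simp
    next
      assume "x = D" then show ?thesis using Dw by (intro exI[of _ "\<beta> + (s - \<beta>) / t"]) simp
    qed
  qed
  with nc show False by blast
qed

lemma quad_rot: "convex_quad A B C D \<Longrightarrow> convex_quad B C D A"
  unfolding convex_quad_def by (simp add: insert_commute open_segment_commute Int_commute)

lemma plane_lemma:
  fixes V A B :: "real^3"
  assumes nz: "cross3 (A - V) (B - V) \<noteq> 0"
  shows "affine hull {V, A, B} = {z. cross3 (A - V) (B - V) \<bullet> (z - V) = 0}"
proof -
  define n where "n = cross3 (A - V) (B - V)"
  have nn: "n \<bullet> n \<noteq> 0" using nz n_def by simp
  show ?thesis unfolding affine_hull_3 n_def[symmetric]
  proof (intro set_eqI iffI; clarsimp)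
    fix u v w :: real assume "u + v + w = 1"
    then have "u *\<^sub>R V + v *\<^sub>R A + w *\<^sub>R B - V = v *\<^sub>R (A - V) + w *\<^sub>R (B - V)"
      by (simp add: algebra_simps flip: add_divide_distrib) (metis add_diff_cancel_left' add_diff_eq scaleR_left_distrib diff_add_cancel add.commute scaleR_one)
    then show "n \<bullet> (u *\<^sub>R V + v *\<^sub>R A + w *\<^sub>R B - V) = 0"
      by (simp add: n_def inner_add_right dot_cross_self)
  next
    fix z assume z: "n \<bullet> (z - V) = 0"
    define v where "v = (cross3 (z - V) (B - V) \<bullet> n) / (n \<bullet> n)"
    define w where "w = (cross3 (A - V) (z - V) \<bullet> n) / (n \<bullet> n)"
    have id: "(n \<bullet> n) *\<^sub>R (z - V) = (cross3 (z - V) (B - V) \<bullet> n) *\<^sub>R (A - V) + (cross3 (A - V) (z - V) \<bullet> n) *\<^sub>R (B - V)"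
      using plane_identity[of "A - V" "B - V" "z - V"] z unfolding n_def by (simp add: inner_commute)
    have "z - V = v *\<^sub>R (A - V) + w *\<^sub>R (B - V)"
    proof -
      have "z - V = (1 / (n \<bullet> n)) *\<^sub>R ((n \<bullet> n) *\<^sub>R (z - V))" using nn by simp
      also have "\<dots> = v *\<^sub>R (A - V) + w *\<^sub>R (B - V)" unfolding id v_def w_def
        by (simp add: scaleR_add_right)
      finally show ?thesis .
    qed
    then have "z = (1 - v - w) *\<^sub>R V + v *\<^sub>R A + w *\<^sub>R B" by (simp add: algebra_simps)
    then show "\<exists>u v w. z = u *\<^sub>R V + v *\<^sub>R A + w *\<^sub>R B \<and> u + v + w = 1" by force
  qed
qed


lemma triple_swap: "cross3 (B - A) (C - A) \<bullet> (V - A) = - (cross3 (A - V) (B - V) \<bullet> (C - V))"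
  by (simp add: cross_components inner3 algebra_simps)

lemma det_nz:
  assumes q: "convex_quad A B C D" and V: "V \<notin> affine hull {A, B, C, D}"
  shows "cross3 (A - V) (B - V) \<bullet> (C - V) \<noteq> 0"
proof
  assume z: "cross3 (A - V) (B - V) \<bullet> (C - V) = 0"
  have "V \<in> affine hull {A, B, C}"
    unfolding plane_lemma[OF Q1[OF q]] using z triple_swap[of B A C V] by simp
  moreover have "affine hull {A, B, C} \<subseteq> affine hull {A, B, C, D}"
    by (rule hull_mono) auto
  ultimately show False using V by blast
qed

lemma angle_rot: "admissible_angle V A B C D \<Longrightarrow> admissible_angle V B C D A"
proof -
  have e: "{B, C, D, A} = {A, B, C, D}" by auto
  show "admissible_angle V A B C D \<Longrightarrow> admissible_angle V B C D A"
    unfolding admissible_angle_def hedral_angle_def e using quad_rot by blast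
qed

definition plane_of :: "real^3 \<Rightarrow> (real^3) set" where
  "plane_of P = {x. x$3 = P$1 * x$1 + P$2 * x$2 - P$3}"

lemma plane_of_inj: "plane_of P = plane_of Q \<Longrightarrow> P = Q"
proof -
  assume e: "plane_of P = plane_of Q"
  have m: "x \<in> plane_of P \<Longrightarrow> x \<in> plane_of Q" for x using e by simp
  have 1: "vector [0, 0, - P$3] \<in> plane_of (P::real^3)" by (simp add: plane_of_def)
  have 2: "vector [1, 0, P$1 - P$3] \<in> plane_of (P::real^3)" by (simp add: plane_of_def)
  have 3: "vector [0, 1, P$2 - P$3] \<in> plane_of (P::real^3)" by (simp add: plane_of_def)
  have a: "P$3 = Q$3" using m[OF 1] by (simp add: plane_of_def)
  have b: "P$1 = Q$1" using m[OF 2] a by (simp add: plane_of_def)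
  have c: "P$2 = Q$2" using m[OF 3] a by (simp add: plane_of_def)
  show "P = Q" using a b c by (simp add: vec_eq_iff forall_3)
qed

lemma dual_point_plane_of: "dual_point (plane_of P) = P"
  unfolding dual_point_def
proof (rule the_equality)
  show "plane_of P = {x. x $ 3 = P $ 1 * x $ 1 + P $ 2 * x $ 2 - P $ 3}" by (simp add: plane_of_def)
  fix Q :: "real^3" assume "plane_of P = {x. x $ 3 = Q $ 1 * x $ 1 + Q $ 2 * x $ 2 - Q $ 3}"
  then have "plane_of P = plane_of Q" by (simp add: plane_of_def)
  then show "Q = P" using plane_of_inj by simp
qed

lemma A1:
  assumes adm: "admissible_angle V A B C D"
  shows "\<exists>P. affine hull {V, A, B} = plane_of P"
proof -
  from adm have q: "convex_quad A B C D" and Vn: "V \<notin> affine hull {A, B, C, D}"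
    and iso: "\<exists>s. V + s *\<^sub>R isotropic_dir \<in> interior (hedral_angle V A B C D)"
    unfolding admissible_angle_def by auto
  define n where "n = cross3 (A - V) (B - V)"
  define \<kappa> where "\<kappa> = n \<bullet> (C - V)"
  have k0: "\<kappa> \<noteq> 0" using det_nz[OF q Vn] by (simp add: \<kappa>_def n_def)
  have n0: "n \<noteq> 0" using k0 by (auto simp: \<kappa>_def)
  have nA: "n \<bullet> (A - V) = 0" and nB: "n \<bullet> (B - V) = 0" unfolding n_def
    by (simp_all add: dot_cross_self inner_commute)
  have n3: "n$3 \<noteq> 0"
  proof
    assume n3: "n$3 = 0"
    from q obtain Q where O1: "Q \<in> open_segment A C" and O2: "Q \<in> open_segment B D"
      unfolding convex_quad_def by blast
    from O1 obtain s where s: "0 < s" "Q = (1 - s) *\<^sub>R A + s *\<^sub>R C" by (auto simp: in_segment)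
    from O2 obtain t where t: "0 < t" "Q = (1 - t) *\<^sub>R B + t *\<^sub>R D" by (auto simp: in_segment)
    have "Q - V = (1 - s) *\<^sub>R (A - V) + s *\<^sub>R (C - V)" using s by (simp add: algebra_simps)
    then have e1: "n \<bullet> (Q - V) = s * \<kappa>" using nA by (simp add: inner_add_right \<kappa>_def)
    have "Q - V = (1 - t) *\<^sub>R (B - V) + t *\<^sub>R (D - V)" using t by (simp add: algebra_simps)
    then have e2: "n \<bullet> (Q - V) = t * (n \<bullet> (D - V))" using nB by (simp add: inner_add_right)
    define g where "g = \<kappa> *\<^sub>R n"
    have g0: "g \<noteq> 0" using k0 n0 by (simp add: g_def)
    define H where "H = {x. g \<bullet> x \<ge> g \<bullet> V}"
    have memH: "x \<in> H \<longleftrightarrow> 0 \<le> \<kappa> * (n \<bullet> (x - V))" for x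
      by (simp add: H_def g_def inner_diff_right right_diff_distrib)
    have "\<kappa> * (n \<bullet> (D - V)) = (s / t) * (\<kappa> * \<kappa>)" using e1 e2 t(1) by (simp add: field_simps)
    moreover have "0 \<le> (s / t) * (\<kappa> * \<kappa>)" using s(1) t(1) by simp
    ultimately have DH: "D \<in> H" using memH by simp
    have "{A, B, C, D} \<subseteq> H" using DH nA nB by (auto simp: memH \<kappa>_def)
    then have chH: "convex hull {A, B, C, D} \<subseteq> H"
      by (rule hull_minimal) (simp add: H_def convex_halfspace_ge)
    have "hedral_angle V A B C D \<subseteq> H"
    proof
      fix y assume "y \<in> hedral_angle V A B C D"
      then obtain \<tau> x where y: "y = V + \<tau> *\<^sub>R (x - V)" and \<tau>: "\<tau> \<ge> 0" and x: "x \<in> convex hull {A, B, C, D}"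
        unfolding hedral_angle_def by blast
      have "0 \<le> \<kappa> * (n \<bullet> (x - V))" using chH x memH by blast
      then have "0 \<le> \<tau> * (\<kappa> * (n \<bullet> (x - V)))" using \<tau> by simp
      then show "y \<in> H" unfolding memH y by (simp add: algebra_simps)
    qed
    then have "interior (hedral_angle V A B C D) \<subseteq> interior H" by (rule interior_mono)
    also have "interior H = {x. g \<bullet> x > g \<bullet> V}" unfolding H_def using g0 by simp
    finally obtain \<sigma> where "g \<bullet> (V + \<sigma> *\<^sub>R isotropic_dir) > g \<bullet> V" using iso by blast
    moreover have "g \<bullet> isotropic_dir = 0" using n3 by (simp add: g_def isotropic_dir_def inner3)
    ultimately show False by (simp add: inner_add_right)
  qed
  define P where "P = (vector [- n$1 / n$3, - n$2 / n$3, - (n \<bullet> V) / n$3] :: real^3)"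
  have "affine hull {V, A, B} = {z. n \<bullet> (z - V) = 0}" using plane_lemma n0 n_def by simp
  also have "\<dots> = plane_of P"
  proof (intro set_eqI)
    fix z :: "real^3"
    have "n \<bullet> (z - V) = n$1 * z$1 + n$2 * z$2 + n$3 * z$3 - n \<bullet> V"
      by (simp add: inner3 algebra_simps)
    moreover have "(z$3 = P$1 * z$1 + P$2 * z$2 - P$3) \<longleftrightarrow> n$1 * z$1 + n$2 * z$2 + n$3 * z$3 - n \<bullet> V = 0"
      using n3 by (simp add: P_def field_simps)
    ultimately show "z \<in> {z. n \<bullet> (z - V) = 0} \<longleftrightarrow> z \<in> plane_of P" by (simp add: plane_of_def)
  qed
  finally show ?thesis by blast
qed

lemma A2:
  assumes adm: "admissible_angle V A B C D"
  shows "affine hull {V, A, B} \<noteq> affine hull {V, B, C}"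
proof
  assume e: "affine hull {V, A, B} = affine hull {V, B, C}"
  from adm have q: "convex_quad A B C D" and Vn: "V \<notin> affine hull {A, B, C, D}"
    unfolding admissible_angle_def by auto
  have k0: "cross3 (A - V) (B - V) \<bullet> (C - V) \<noteq> 0" using det_nz[OF q Vn] .
  then have n0: "cross3 (A - V) (B - V) \<noteq> 0" by auto
  have "C \<in> affine hull {V, B, C}" by (simp add: hull_inc)
  then have "C \<in> {z. cross3 (A - V) (B - V) \<bullet> (z - V) = 0}" using e plane_lemma[OF n0] by simp
  then show False using k0 by simp
qed

definition nrm :: "real^3 \<Rightarrow> real^3" where
  "nrm P = vector [P$1, P$2, -1]"

lemma plane_of_nrm: "x \<in> plane_of P \<longleftrightarrow> nrm P \<bullet> x = P$3"
  by (auto simp: plane_of_def nrm_def inner3)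

lemma nrm_edge: "x \<in> plane_of P \<Longrightarrow> y \<in> plane_of P \<Longrightarrow> nrm P \<bullet> (x - y) = 0"
  by (simp add: plane_of_nrm inner_diff_right)

lemma plane_distinct_xy:
  assumes "plane_of P \<noteq> plane_of Q" "x \<in> plane_of P" "x \<in> plane_of Q"
  shows "P$1 \<noteq> Q$1 \<or> P$2 \<noteq> Q$2"
proof (rule ccontr)
  assume "\<not> (P$1 \<noteq> Q$1 \<or> P$2 \<noteq> Q$2)"
  then have 1: "P$1 = Q$1" "P$2 = Q$2" by auto
  then have "P$3 = Q$3" using assms(2,3) by (simp add: plane_of_def)
  then have "P = Q" using 1 by (simp add: vec_eq_iff forall_3)
  then show False using assms(1) by simp
qed

lemma quad_ne: "convex_quad A B C D \<Longrightarrow> A \<noteq> B \<and> A \<noteq> D"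
proof -
  assume q: "convex_quad A B C D"
  have "cross3 (B - A) (C - A) \<noteq> 0" using Q1[OF q] .
  then have 1: "A \<noteq> B" by auto
  have "convex_quad D A B C" using quad_rot[OF quad_rot[OF quad_rot[OF q]]] .
  then have "cross3 (A - D) (B - D) \<noteq> 0" using Q1 by blast
  then have 2: "A \<noteq> D" by auto
  show ?thesis using 1 2 by simp
qed

lemma vertex_facts:
  assumes dc: "dual_convex F m n" and ij: "0 < i" "i < m" "0 < j" "j < n"
  shows "(\<exists>P. face_plane F (i - 1) (j - 1) = plane_of P) \<and> (\<exists>P. face_plane F i (j - 1) = plane_of P) \<and>
         (\<exists>P. face_plane F i j = plane_of P) \<and> (\<exists>P. face_plane F (i - 1) j = plane_of P) \<and>
         face_plane F (i - 1) (j - 1) \<noteq> face_plane F i (j - 1) \<and> face_plane F i (j - 1) \<noteq> face_plane F i j \<and>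
         face_plane F i j \<noteq> face_plane F (i - 1) j \<and> face_plane F (i - 1) j \<noteq> face_plane F (i - 1) (j - 1)"
proof -
  obtain V A B C D where adm: "admissible_angle V A B C D" and
      e: "face_plane F (i - 1) (j - 1) = affine hull {V, A, B}"
         "face_plane F i (j - 1) = affine hull {V, B, C}"
         "face_plane F i j = affine hull {V, C, D}"
         "face_plane F (i - 1) j = affine hull {V, D, A}"
    using dc ij unfolding dual_convex_def by blast
  have r1: "admissible_angle V B C D A" using angle_rot[OF adm] .
  have r2: "admissible_angle V C D A B" using angle_rot[OF r1] .
  have r3: "admissible_angle V D A B C" using angle_rot[OF r2] .
  show ?thesis unfolding e using A1[OF adm] A1[OF r1] A1[OF r2] A1[OF r3]
      A2[OF adm] A2[OF r1] A2[OF r2] A2[OF r3] by simp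
qed

lemma metric_dual_eq: "face_plane F k l = plane_of P \<Longrightarrow> face_plane F k l = plane_of (metric_dual F k l)"
  by (simp add: metric_dual_def dual_point_plane_of)

lemma face_eq:
  assumes dc: "dual_convex F m n" and kl: "k < m" "l < n"
  shows "face_plane F k l = plane_of (metric_dual F k l)"
proof -
  have m2: "2 \<le> m" and n2: "2 \<le> n" using dc by (auto simp: dual_convex_def)
  have "\<exists>P. face_plane F k l = plane_of P"
  proof (cases "Suc k < m")
    case True
    note k = True
    show ?thesis
    proof (cases "Suc l < n")
      case True
      from vertex_facts[OF dc _ k _ True] show ?thesis by simp
    next
      case False
      then have "0 < l" "l < n" using kl n2 by auto
      from vertex_facts[OF dc _ k this] show ?thesis by simp
    qed
  next
    case False
    then have k: "0 < k" "k < m" using kl m2 by auto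
    show ?thesis
    proof (cases "Suc l < n")
      case True
      from vertex_facts[OF dc k _ True] show ?thesis by simp
    next
      case False
      then have "0 < l" "l < n" using kl n2 by auto
      from vertex_facts[OF dc k this] show ?thesis by simp
    qed
  qed
  then show ?thesis using metric_dual_eq by blast
qed

lemma face_verts:
  "F k l \<in> face_plane F k l" "F (Suc k) l \<in> face_plane F k l"
  "F (Suc k) (Suc l) \<in> face_plane F k l" "F k (Suc l) \<in> face_plane F k l"
  unfolding face_plane_def by (simp_all add: hull_inc)

lemma distinct_l:
  assumes dc: "dual_convex F m n" and ij: "i < m" "0 < j" "j < n"
  shows "face_plane F i (j - 1) \<noteq> face_plane F i j"
proof (cases "0 < i")
  case True
  from vertex_facts[OF dc True ij(1) ij(2,3)] show ?thesis by simp
next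
  case False
  have m2: "2 \<le> m" using dc by (auto simp: dual_convex_def)
  then have "0 < Suc i" "Suc i < m" using False by auto
  from vertex_facts[OF dc this ij(2,3)] show ?thesis by auto
qed

lemma distinct_k:
  assumes dc: "dual_convex F m n" and ij: "0 < i" "i < m" "j < n"
  shows "face_plane F (i - 1) j \<noteq> face_plane F i j"
proof (cases "0 < j")
  case True
  from vertex_facts[OF dc ij(1,2) True ij(3)] show ?thesis by auto
next
  case False
  have n2: "2 \<le> n" using dc by (auto simp: dual_convex_def)
  then have "0 < Suc j" "Suc j < n" using False by auto
  from vertex_facts[OF dc ij(1,2) this] show ?thesis by auto
qed

definition Ue :: "(nat \<Rightarrow> nat \<Rightarrow> real^3) \<Rightarrow> nat \<Rightarrow> nat \<Rightarrow> nat \<Rightarrow> nat \<Rightarrow> real^3" where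
  "Ue F k l k' l' = (if k = k' then F k (max l l') - F (Suc k) (max l l') else F (max k k') l - F (max k k') (Suc l))"

definition edge_ok :: "real^3 \<Rightarrow> real^3 \<Rightarrow> real^3 \<Rightarrow> bool" where
  "edge_ok u P Q \<longleftrightarrow> u \<noteq> 0 \<and> nrm P \<bullet> u = 0 \<and> nrm Q \<bullet> u = 0 \<and> (P$1 \<noteq> Q$1 \<or> P$2 \<noteq> Q$2)"

lemma edge_ok_sym: "edge_ok u P Q \<Longrightarrow> edge_ok u Q P"
  unfolding edge_ok_def by auto

lemma U_l:
  assumes dc: "dual_convex F m n" and ij: "i < m" "0 < j" "j < n"
  shows "edge_ok (F i j - F (Suc i) j) (metric_dual F i j) (metric_dual F i (j - 1))"
proof -
  have net: "is_net F m n" using dc by (simp add: dual_convex_def)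
  have q: "convex_quad (F i j) (F (Suc i) j) (F (Suc i) (Suc j)) (F i (Suc j))"
    using net ij unfolding is_net_def by blast
  have ne: "F i j - F (Suc i) j \<noteq> 0" using quad_ne[OF q] by simp
  have j1: "Suc (j - 1) = j" using ij by simp
  have e1: "face_plane F i j = plane_of (metric_dual F i j)" using face_eq[OF dc ij(1) ij(3)] .
  have e2: "face_plane F i (j - 1) = plane_of (metric_dual F i (j - 1))" using face_eq[OF dc ij(1)] ij by simp
  have a1: "F i j \<in> plane_of (metric_dual F i j)" "F (Suc i) j \<in> plane_of (metric_dual F i j)"
    using face_verts[of F i j] e1 by auto
  have a2: "F i j \<in> plane_of (metric_dual F i (j - 1))" "F (Suc i) j \<in> plane_of (metric_dual F i (j - 1))"
    using face_verts(3,4)[of F i "j - 1"] e2 j1 by auto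
  have d: "plane_of (metric_dual F i j) \<noteq> plane_of (metric_dual F i (j - 1))"
    using distinct_l[OF dc ij] e1 e2 by simp
  show ?thesis unfolding edge_ok_def
    using ne nrm_edge[OF a1] nrm_edge[OF a2] plane_distinct_xy[OF d a1(1) a2(1)] by simp
qed

lemma U_k:
  assumes dc: "dual_convex F m n" and ij: "0 < i" "i < m" "j < n"
  shows "edge_ok (F i j - F i (Suc j)) (metric_dual F i j) (metric_dual F (i - 1) j)"
proof -
  have net: "is_net F m n" using dc by (simp add: dual_convex_def)
  have q: "convex_quad (F i j) (F (Suc i) j) (F (Suc i) (Suc j)) (F i (Suc j))"
    using net ij unfolding is_net_def by blast
  have ne: "F i j - F i (Suc j) \<noteq> 0" using quad_ne[OF q] by simp
  have i1: "Suc (i - 1) = i" using ij by simp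
  have e1: "face_plane F i j = plane_of (metric_dual F i j)" using face_eq[OF dc ij(2) ij(3)] .
  have e2: "face_plane F (i - 1) j = plane_of (metric_dual F (i - 1) j)" using face_eq[OF dc _ ij(3)] ij by simp
  have a1: "F i j \<in> plane_of (metric_dual F i j)" "F i (Suc j) \<in> plane_of (metric_dual F i j)"
    using face_verts[of F i j] e1 by auto
  have a2: "F i j \<in> plane_of (metric_dual F (i - 1) j)" "F i (Suc j) \<in> plane_of (metric_dual F (i - 1) j)"
    using face_verts(2,3)[of F "i - 1" j] e2 i1 by auto
  have d: "plane_of (metric_dual F i j) \<noteq> plane_of (metric_dual F (i - 1) j)"
    using distinct_k[OF dc ij] e1 e2 by simp
  show ?thesis unfolding edge_ok_def
    using ne nrm_edge[OF a1] nrm_edge[OF a2] plane_distinct_xy[OF d a1(1) a2(1)] by simp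
qed

lemma U_props:
  assumes dc: "dual_convex F m n" and r: "k < m" "l < n" "k' < m" "l' < n"
    and adj: "adjacent (k, l) (k', l')"
  shows "edge_ok (Ue F k l k' l') (metric_dual F k l) (metric_dual F k' l')"
proof -
  from adj have "(k = k' \<and> l = Suc l') \<or> (k = k' \<and> l' = Suc l) \<or> (l = l' \<and> k = Suc k') \<or> (l = l' \<and> k' = Suc k)"
    unfolding adjacent_def by auto
  then show ?thesis
  proof (elim disjE conjE)
    assume a: "k = k'" "l = Suc l'"
    have "edge_ok (F k l - F (Suc k) l) (metric_dual F k l) (metric_dual F k (l - 1))"
      using U_l[OF dc r(1), of l] r a by simp
    then show ?thesis using a by (simp add: Ue_def max_def)
  next
    assume a: "k = k'" "l' = Suc l"
    have "edge_ok (F k l' - F (Suc k) l') (metric_dual F k l') (metric_dual F k (l' - 1))"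
      using U_l[OF dc r(1), of l'] r a by simp
    then show ?thesis using a by (simp add: Ue_def max_def edge_ok_sym)
  next
    assume a: "l = l'" "k = Suc k'"
    have "edge_ok (F k l - F k (Suc l)) (metric_dual F k l) (metric_dual F (k - 1) l)"
      using U_k[OF dc _ r(1) r(2)] a by simp
    then show ?thesis using a by (simp add: Ue_def max_def)
  next
    assume a: "l = l'" "k' = Suc k"
    have "edge_ok (F k' l - F k' (Suc l)) (metric_dual F k' l) (metric_dual F (k' - 1) l)"
      using U_k[OF dc _ r(3) r(2)] a by simp
    then show ?thesis using a by (simp add: Ue_def max_def edge_ok_sym)
  qed
qed

lemma par_neg: "cross3 (X - Y) u = 0 \<longleftrightarrow> cross3 (Y - X) u = 0"
proof -
  have "Y - X = - (X - Y)" by simp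
  then show ?thesis by (metis cross_minus_left neg_equal_0_iff_equal)
qed

lemma RP_iff:
  "reciprocal_parallel F m n C \<longleftrightarrow> not_all_equal C m n \<and>
     (\<forall>k l k' l'. k < m \<and> l < n \<and> k' < m \<and> l' < n \<and> adjacent (k, l) (k', l') \<longrightarrow>
        cross3 (C k l - C k' l') (Ue F k l k' l') = 0)"
proof
  assume rp: "reciprocal_parallel F m n C"
  then have c1: "\<And>i j. i < m \<Longrightarrow> 0 < j \<Longrightarrow> j < n \<Longrightarrow> cross3 (C i j - C i (j - 1)) (F i j - F (Suc i) j) = 0"
    and c2: "\<And>i j. 0 < i \<Longrightarrow> i < m \<Longrightarrow> j < n \<Longrightarrow> cross3 (C i j - C (i - 1) j) (F i j - F i (Suc j)) = 0"
    and na: "not_all_equal C m n"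
    unfolding reciprocal_parallel_def par_iff by auto
  show "not_all_equal C m n \<and> (\<forall>k l k' l'. k < m \<and> l < n \<and> k' < m \<and> l' < n \<and> adjacent (k, l) (k', l') \<longrightarrow>
        cross3 (C k l - C k' l') (Ue F k l k' l') = 0)"
  proof (intro conjI na allI impI, elim conjE)
    fix k l k' l' assume r: "k < m" "l < n" "k' < m" "l' < n" and adj: "adjacent (k, l) (k', l')"
    from adj have "(k = k' \<and> l = Suc l') \<or> (k = k' \<and> l' = Suc l) \<or> (l = l' \<and> k = Suc k') \<or> (l = l' \<and> k' = Suc k)"
      unfolding adjacent_def by auto
    then show "cross3 (C k l - C k' l') (Ue F k l k' l') = 0"
    proof (elim disjE conjE)
      assume a: "k = k'" "l = Suc l'"
      show ?thesis using c1[of k l] r a by (simp add: Ue_def max_def)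
    next
      assume a: "k = k'" "l' = Suc l"
      show ?thesis using c1[of k l'] r a par_neg by (simp add: Ue_def max_def)
    next
      assume a: "l = l'" "k = Suc k'"
      show ?thesis using c2[of k l] r a by (simp add: Ue_def max_def)
    next
      assume a: "l = l'" "k' = Suc k"
      show ?thesis using c2[of k' l] r a par_neg by (simp add: Ue_def max_def)
    qed
  qed
next
  assume h: "not_all_equal C m n \<and> (\<forall>k l k' l'. k < m \<and> l < n \<and> k' < m \<and> l' < n \<and> adjacent (k, l) (k', l') \<longrightarrow>
        cross3 (C k l - C k' l') (Ue F k l k' l') = 0)"
  show "reciprocal_parallel F m n C" unfolding reciprocal_parallel_def par_iff
  proof (intro conjI allI impI)
    show "not_all_equal C m n" using h by simp
  next
    fix i j assume a: "i < m \<and> 0 < j \<and> j < n"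
    then have "adjacent (i, j) (i, j - 1)" by (simp add: adjacent_def)
    then have "cross3 (C i j - C i (j - 1)) (Ue F i j i (j - 1)) = 0" using h a by auto
    moreover have "max j (j - 1) = j" by simp
    ultimately show "cross3 (C i j - C i (j - 1)) (F i j - F (Suc i) j) = 0" by (simp add: Ue_def)
  next
    fix i j assume a: "0 < i \<and> i < m \<and> j < n"
    then have "adjacent (i, j) (i - 1, j)" by (simp add: adjacent_def)
    then have "cross3 (C i j - C (i - 1) j) (Ue F i j (i - 1) j) = 0" using h a by auto
    moreover have "max i (i - 1) = i" "i \<noteq> i - 1" using a by auto
    ultimately show "cross3 (C i j - C (i - 1) j) (F i j - F i (Suc j)) = 0" by (simp add: Ue_def)
  qed
qed

lemma grid_potential:
  fixes w1 w2 :: "nat \<Rightarrow> nat \<Rightarrow> real"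
  assumes cl: "\<And>k l. Suc k < m \<Longrightarrow> Suc l < n \<Longrightarrow> w1 k l + w2 (Suc k) l = w2 k l + w1 k (Suc l)"
  shows "\<exists>\<phi>. (\<forall>k l. Suc k < m \<longrightarrow> l < n \<longrightarrow> \<phi> (Suc k) l - \<phi> k l = w1 k l) \<and>
             (\<forall>k l. k < m \<longrightarrow> Suc l < n \<longrightarrow> \<phi> k (Suc l) - \<phi> k l = w2 k l)"
proof -
  define \<phi> where "\<phi> k l = (\<Sum>a<k. w1 a 0) + (\<Sum>b<l. w2 k b)" for k l
  have A: "\<phi> (Suc k) l - \<phi> k l = w1 k l" if "Suc k < m" "l < n" for k l
    using that(2)
  proof (induction l)
    case 0
    then show ?case by (simp add: \<phi>_def)
  next
    case (Suc l)
    have IH: "\<phi> (Suc k) l - \<phi> k l = w1 k l" using Suc by simp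
    have "\<phi> (Suc k) (Suc l) - \<phi> k (Suc l) = (\<phi> (Suc k) l - \<phi> k l) + w2 (Suc k) l - w2 k l"
      by (simp add: \<phi>_def)
    also have "\<dots> = w1 k (Suc l)" using IH cl[OF that(1) Suc.prems] by simp
    finally show ?case .
  qed
  have B: "\<phi> k (Suc l) - \<phi> k l = w2 k l" for k l by (simp add: \<phi>_def)
  show ?thesis using A B by blast
qed

lemma grid_conn:
  assumes h: "\<forall>k l k' l'. k < m \<and> l < n \<and> k' < m \<and> l' < n \<and> adjacent (k, l) (k', l') \<longrightarrow> f k l = f k' l'"
    and kl: "k < m" "l < n"
  shows "f k l = f 0 0"
proof -
  have A: "f k 0 = f 0 0" if "k < m" "0 < n" for k
    using that(1)
  proof (induction k)
    case 0 then show ?case by simp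
  next
    case (Suc k)
    have "adjacent (Suc k, 0) (k, 0)" by (simp add: adjacent_def)
    then have "f (Suc k) 0 = f k 0" using h Suc.prems that(2) by auto
    then show ?case using Suc by simp
  qed
  have B: "f k l = f k 0" if "k < m" "l < n" for l
    using that(2)
  proof (induction l)
    case 0 then show ?case by simp
  next
    case (Suc l)
    have "adjacent (k, Suc l) (k, l)" by (simp add: adjacent_def)
    then have "f k (Suc l) = f k l" using h Suc.prems that(1) by auto
    then show ?case using Suc by simp
  qed
  show ?thesis using A[OF kl(1)] B[OF kl] kl by simp
qed

lemma not_all_equal_const:
  assumes "\<And>k l. k < m \<Longrightarrow> l < n \<Longrightarrow> f k l = f 0 0"
  shows "\<not> not_all_equal f m n"
  using assms unfolding not_all_equal_def by metis

lemma fwd_edge: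
  assumes "cross3 X u = 0" "u \<noteq> 0" "N \<bullet> u = 0"
  shows "N \<bullet> X = 0"
proof -
  have uu: "u \<bullet> u \<noteq> 0" using assms(2) by simp
  have "X = ((X \<bullet> u) / (u \<bullet> u)) *\<^sub>R u" using scale_solve[OF uu cross_zero_scale[OF assms(1)]] .
  then have "N \<bullet> X = ((X \<bullet> u) / (u \<bullet> u)) * (N \<bullet> u)" by (metis inner_scaleR_right)
  then show ?thesis using assms(3) by simp
qed

lemma sub_par:
  assumes "X$3 = V$1 * X$1 + V$2 * X$2" "Y$3 = V$1 * Y$1 + V$2 * Y$2" "X$1 * Y$2 - X$2 * Y$1 = 0"
  shows "cross3 X Y = 0"
proof -
  have a: "X$2 * Y$3 - Y$2 * X$3 = - V$1 * (X$1 * Y$2 - X$2 * Y$1)" unfolding assms(1,2) by (simp add: algebra_simps)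
  have b: "X$3 * Y$1 - Y$3 * X$1 = - V$2 * (X$1 * Y$2 - X$2 * Y$1)" unfolding assms(1,2) by (simp add: algebra_simps)
  have c: "X$1 * Y$2 - Y$1 * X$2 = X$1 * Y$2 - X$2 * Y$1" by (simp add: algebra_simps)
  show ?thesis unfolding vec_eq_iff forall_3 cross_components using a b c assms(3) by simp
qed

lemma square_lemma:
  fixes c0 c1 c2 c3 P0 P1 P2 P3 V :: "real^3" and hA hB hC hD :: real
  assumes
    h01: "hA - hB = (c0$1 - c1$1) * P0$2 - (c0$2 - c1$2) * P0$1" and
    h10: "hB - hA = (c1$1 - c0$1) * P1$2 - (c1$2 - c0$2) * P1$1" and
    h12: "hB - hC = (c1$1 - c2$1) * P1$2 - (c1$2 - c2$2) * P1$1" and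
    h21: "hC - hB = (c2$1 - c1$1) * P2$2 - (c2$2 - c1$2) * P2$1" and
    h23: "hC - hD = (c2$1 - c3$1) * P2$2 - (c2$2 - c3$2) * P2$1" and
    h32: "hD - hC = (c3$1 - c2$1) * P3$2 - (c3$2 - c2$2) * P3$1" and
    h30: "hD - hA = (c3$1 - c0$1) * P3$2 - (c3$2 - c0$2) * P3$1" and
    h03: "hA - hD = (c0$1 - c3$1) * P0$2 - (c0$2 - c3$2) * P0$1" and
    p0: "P0$3 = V$1 * P0$1 + V$2 * P0$2 - V$3" and
    p1: "P1$3 = V$1 * P1$1 + V$2 * P1$2 - V$3" and
    p2: "P2$3 = V$1 * P2$1 + V$2 * P2$2 - V$3" and
    p3: "P3$3 = V$1 * P3$1 + V$2 * P3$2 - V$3" and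
    v10: "c1$3 - c0$3 = V$1 * (c1$1 - c0$1) + V$2 * (c1$2 - c0$2)" and
    v21: "c2$3 - c1$3 = V$1 * (c2$1 - c1$1) + V$2 * (c2$2 - c1$2)" and
    v32: "c3$3 - c2$3 = V$1 * (c3$1 - c2$1) + V$2 * (c3$2 - c2$2)"
  shows "dual_quads c0 c1 c2 c3 P0 P1 P2 P3"
proof -
  have iv: "\<And>X Y. X$3 = V$1 * X$1 + V$2 * X$2 \<Longrightarrow> Y$3 = V$1 * Y$1 + V$2 * Y$2 \<Longrightarrow>
      X$1 * Y$2 - X$2 * Y$1 = 0 \<Longrightarrow> par X Y" using sub_par par_iff by blast
  show ?thesis unfolding dual_quads_def
  proof (intro conjI)
    show "par (c1 - c0) (P1 - P0)"
      by (rule iv) (use v10 p0 p1 h01 h10 in \<open>simp_all add: algebra_simps\<close>)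
    show "par (c2 - c1) (P2 - P1)"
      by (rule iv) (use v21 p1 p2 h12 h21 in \<open>simp_all add: algebra_simps\<close>)
    show "par (c3 - c2) (P3 - P2)"
      by (rule iv) (use v32 p2 p3 h23 h32 in \<open>simp_all add: algebra_simps\<close>)
    show "par (c0 - c3) (P0 - P3)"
      by (rule iv) (use v10 v21 v32 p0 p3 h30 h03 in \<open>simp_all add: algebra_simps\<close>)
    show "par (c2 - c0) (P3 - P1)"
      by (rule iv) (use v10 v21 p3 p1 h10 h12 h32 h30 in \<open>simp_all add: algebra_simps\<close>)
    show "par (c3 - c1) (P2 - P0)"
      by (rule iv) (use v21 v32 p2 p0 h01 h21 h23 h03 in \<open>simp_all add: algebra_simps\<close>)
  qed
qed

lemma neg2: "cross3 (x - y) (z - w) = cross3 (y - x) (w - z)"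
  by (metis cross_minus_left cross_minus_right minus_diff_eq minus_minus)

lemma CD_l:
  assumes cd: "christoffel_dual P Q m n" and m2: "2 \<le> m" and kl: "k < m" "Suc l < n"
  shows "cross3 (P k (Suc l) - P k l) (Q k (Suc l) - Q k l) = 0"
proof (cases "Suc k < m")
  case True
  then have "dual_quads (P k l) (P (Suc k) l) (P (Suc k) (Suc l)) (P k (Suc l))
                (Q k l) (Q (Suc k) l) (Q (Suc k) (Suc l)) (Q k (Suc l))"
    using cd kl unfolding christoffel_dual_def by blast
  then have "cross3 (P k l - P k (Suc l)) (Q k l - Q k (Suc l)) = 0"
    unfolding dual_quads_def par_iff by blast
  then show ?thesis using neg2 by metis
next
  case False
  then have k1: "Suc (k - 1) = k" "Suc (k - 1) < m" using kl m2 by auto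
  then have "dual_quads (P (k-1) l) (P (Suc (k-1)) l) (P (Suc (k-1)) (Suc l)) (P (k-1) (Suc l))
                (Q (k-1) l) (Q (Suc (k-1)) l) (Q (Suc (k-1)) (Suc l)) (Q (k-1) (Suc l))"
    using cd kl unfolding christoffel_dual_def by blast
  then show ?thesis unfolding dual_quads_def par_iff k1(1) by blast
qed

lemma CD_k:
  assumes cd: "christoffel_dual P Q m n" and n2: "2 \<le> n" and kl: "Suc k < m" "l < n"
  shows "cross3 (P (Suc k) l - P k l) (Q (Suc k) l - Q k l) = 0"
proof (cases "Suc l < n")
  case True
  then have "dual_quads (P k l) (P (Suc k) l) (P (Suc k) (Suc l)) (P k (Suc l))
                (Q k l) (Q (Suc k) l) (Q (Suc k) (Suc l)) (Q k (Suc l))"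
    using cd kl unfolding christoffel_dual_def by blast
  then show ?thesis unfolding dual_quads_def par_iff by blast
next
  case False
  then have l1: "Suc (l - 1) = l" "Suc (l - 1) < n" using kl n2 by auto
  then have "dual_quads (P k (l-1)) (P (Suc k) (l-1)) (P (Suc k) (Suc (l-1))) (P k (Suc (l-1)))
                (Q k (l-1)) (Q (Suc k) (l-1)) (Q (Suc k) (Suc (l-1))) (Q k (Suc (l-1)))"
    using cd kl unfolding christoffel_dual_def by blast
  then have "cross3 (P k l - P (Suc k) l) (Q k l - Q (Suc k) l) = 0"
    unfolding dual_quads_def par_iff l1(1) by blast
  then show ?thesis using neg2 by metis
qed

lemma CD_edge:
  assumes cd: "christoffel_dual P Q m n" and m2: "2 \<le> m" and n2: "2 \<le> n"
    and r: "k < m" "l < n" "k' < m" "l' < n" and adj: "adjacent (k, l) (k', l')"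
  shows "cross3 (P k l - P k' l') (Q k l - Q k' l') = 0"
proof -
  from adj have "(k = k' \<and> l = Suc l') \<or> (k = k' \<and> l' = Suc l) \<or> (l = l' \<and> k = Suc k') \<or> (l = l' \<and> k' = Suc k)"
    unfolding adjacent_def by auto
  then show ?thesis
  proof (elim disjE conjE)
    assume a: "k = k'" "l = Suc l'"
    show ?thesis using CD_l[OF cd m2, of k' l'] a r by simp
  next
    assume a: "k = k'" "l' = Suc l"
    show ?thesis using CD_l[OF cd m2, of k l] a r neg2 by metis
  next
    assume a: "l = l'" "k = Suc k'"
    show ?thesis using CD_k[OF cd n2, of k' l'] a r by simp
  next
    assume a: "l = l'" "k' = Suc k"
    show ?thesis using CD_k[OF cd n2, of k l] a r neg2 by metis
  qed
qed

lemma nrm_cross_nz: "P$1 \<noteq> Q$1 \<or> P$2 \<noteq> Q$2 \<Longrightarrow> cross3 (nrm P) (nrm Q) \<noteq> 0"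
  by (auto simp: vec_eq_iff forall_3 cross_components nrm_def)

lemma adjacent_sym: "adjacent a b \<Longrightarrow> adjacent b a"
  unfolding adjacent_def by auto

lemma plane_P3: "x \<in> plane_of P \<Longrightarrow> P$3 = x$1 * P$1 + x$2 * P$2 - x$3"
  by (simp add: plane_of_def algebra_simps)

theorem lemma8:
  fixes F :: "nat \<Rightarrow> nat \<Rightarrow> real^3" and m n :: nat and C :: "nat \<Rightarrow> nat \<Rightarrow> real^3"
  assumes "dual_convex F m n"
  shows "reciprocal_parallel F m n C \<longleftrightarrow>
    (\<exists>c :: nat \<Rightarrow> nat \<Rightarrow> real^3. \<exists>h :: nat \<Rightarrow> nat \<Rightarrow> real.
       (\<forall>k l. k < m \<and> l < n \<longrightarrow> C k l = vector [- (c k l $ 2), c k l $ 1, h k l]) \<and>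
       not_all_equal c m n \<and>
       christoffel_dual c (metric_dual F) m n \<and>
       (\<forall>k l k' l'. k < m \<and> l < n \<and> k' < m \<and> l' < n \<and> adjacent (k, l) (k', l') \<longrightarrow>
          h k l - h k' l' = (c k l $ 1 - c k' l' $ 1) * (metric_dual F k l $ 2)
                            - (c k l $ 2 - c k' l' $ 2) * (metric_dual F k l $ 1)))"
proof -
  note dc = assms
  have m2: "2 \<le> m" and n2: "2 \<le> n" using dc by (auto simp: dual_convex_def)
  let ?p = "metric_dual F"
  have EO: "\<And>k l k' l'. k < m \<Longrightarrow> l < n \<Longrightarrow> k' < m \<Longrightarrow> l' < n \<Longrightarrow> adjacent (k, l) (k', l') \<Longrightarrow>
      edge_ok (Ue F k l k' l') (?p k l) (?p k' l')" using U_props[OF dc] by blast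
  have Vp: "?p k l $ 3 = F (Suc i) (Suc j) $ 1 * ?p k l $ 1 + F (Suc i) (Suc j) $ 2 * ?p k l $ 2 - F (Suc i) (Suc j) $ 3"
    if "k < m" "l < n" "F (Suc i) (Suc j) \<in> face_plane F k l" for k l i j
    using plane_P3 face_eq[OF dc that(1,2)] that(3) by simp
  show ?thesis
  proof
    assume rp: "reciprocal_parallel F m n C"
    then have na: "not_all_equal C m n" and
      cr: "\<And>k l k' l'. k < m \<Longrightarrow> l < n \<Longrightarrow> k' < m \<Longrightarrow> l' < n \<Longrightarrow> adjacent (k, l) (k', l') \<Longrightarrow>
        cross3 (C k l - C k' l') (Ue F k l k' l') = 0"
      unfolding RP_iff[of F m n C] by blast+
    have XN: "nrm (?p k l) \<bullet> (C k l - C k' l') = 0"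
      if "k < m" "l < n" "k' < m" "l' < n" "adjacent (k, l) (k', l')" for k l k' l'
      using fwd_edge[OF cr[OF that]] EO[OF that] unfolding edge_ok_def by blast
    define h where "h k l = C k l $ 3" for k l
    define om where "om V X = V$1 * X$2 - V$2 * X$1" for V X :: "real^3"
    have omU: "om u X = 0" if "cross3 X u = 0" for u X
      using that cross_components(3)[of X u] unfolding om_def by (simp add: vec_eq_iff algebra_simps)
    define w1 where "w1 k l = om (F (Suc k) (Suc l)) (C (Suc k) l - C k l)" for k l
    define w2 where "w2 k l = om (F (Suc k) (Suc l)) (C k (Suc l) - C k l)" for k l
    have W2: "w2 (Suc k) l = om (F (Suc k) (Suc l)) (C (Suc k) (Suc l) - C (Suc k) l)"
      if "Suc k < m" "Suc l < n" for k l
    proof -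
      have "adjacent (Suc k, Suc l) (Suc k, l)" by (simp add: adjacent_def)
      then have "cross3 (C (Suc k) (Suc l) - C (Suc k) l) (F (Suc k) (Suc l) - F (Suc (Suc k)) (Suc l)) = 0"
        using cr[of "Suc k" "Suc l" "Suc k" l] that by (simp add: Ue_def)
      then have "om (F (Suc k) (Suc l) - F (Suc (Suc k)) (Suc l)) (C (Suc k) (Suc l) - C (Suc k) l) = 0"
        by (rule omU)
      then show ?thesis unfolding w2_def om_def by (simp add: algebra_simps)
    qed
    have W1: "w1 k (Suc l) = om (F (Suc k) (Suc l)) (C (Suc k) (Suc l) - C k (Suc l))"
      if "Suc k < m" "Suc l < n" for k l
    proof -
      have "adjacent (Suc k, Suc l) (k, Suc l)" by (simp add: adjacent_def)
      then have "cross3 (C (Suc k) (Suc l) - C k (Suc l)) (F (Suc k) (Suc l) - F (Suc k) (Suc (Suc l))) = 0"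
        using cr[of "Suc k" "Suc l" k "Suc l"] that by (simp add: Ue_def)
      then have "om (F (Suc k) (Suc l) - F (Suc k) (Suc (Suc l))) (C (Suc k) (Suc l) - C k (Suc l)) = 0"
        by (rule omU)
      then show ?thesis unfolding w1_def om_def by (simp add: algebra_simps)
    qed
    have clos: "w1 k l + w2 (Suc k) l = w2 k l + w1 k (Suc l)" if "Suc k < m" "Suc l < n" for k l
      unfolding W1[OF that] W2[OF that] unfolding w1_def w2_def om_def by (simp add: algebra_simps)
    obtain \<phi> where phi1: "\<And>k l. Suc k < m \<Longrightarrow> l < n \<Longrightarrow> \<phi> (Suc k) l - \<phi> k l = w1 k l"
      and phi2: "\<And>k l. k < m \<Longrightarrow> Suc l < n \<Longrightarrow> \<phi> k (Suc l) - \<phi> k l = w2 k l"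
      using grid_potential[of m n w1 w2, OF clos] by blast
    define c where "c k l = (vector [C k l $ 2, - (C k l $ 1), \<phi> k l] :: real^3)" for k l
    have c1: "c k l $ 1 = C k l $ 2" and c2: "c k l $ 2 = - (C k l $ 1)" and c3: "c k l $ 3 = \<phi> k l" for k l
      by (simp_all add: c_def)
    have hf: "h k l - h k' l' = (c k l $ 1 - c k' l' $ 1) * (?p k l $ 2) - (c k l $ 2 - c k' l' $ 2) * (?p k l $ 1)"
      if "k < m" "l < n" "k' < m" "l' < n" "adjacent (k, l) (k', l')" for k l k' l'
      using XN[OF that] unfolding h_def c1 c2 nrm_def inner3 by (simp add: algebra_simps)
    show "\<exists>c h. (\<forall>k l. k < m \<and> l < n \<longrightarrow> C k l = vector [- (c k l $ 2), c k l $ 1, h k l]) \<and>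
       not_all_equal c m n \<and>
       christoffel_dual c (metric_dual F) m n \<and>
       (\<forall>k l k' l'. k < m \<and> l < n \<and> k' < m \<and> l' < n \<and> adjacent (k, l) (k', l') \<longrightarrow>
          h k l - h k' l' = (c k l $ 1 - c k' l' $ 1) * (metric_dual F k l $ 2)
                            - (c k l $ 2 - c k' l' $ 2) * (metric_dual F k l $ 1))"
    proof (intro exI[of _ c] exI[of _ h] conjI allI impI)
      fix k l assume "k < m \<and> l < n"
      show "C k l = vector [- (c k l $ 2), c k l $ 1, h k l]"
        by (simp add: vec_eq_iff forall_3 c1 c2 h_def)
    next
      show "not_all_equal c m n"
      proof (rule ccontr)
        assume nc: "\<not> not_all_equal c m n"
        have ceq: "c k l = c k' l'" if "k < m" "l < n" "k' < m" "l' < n" for k l k' l'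
          using nc that unfolding not_all_equal_def by blast
        have "C k l = C k' l'" if "k < m" "l < n" "k' < m" "l' < n" "adjacent (k, l) (k', l')" for k l k' l'
        proof -
          have e: "c k l = c k' l'" using ceq that(1-4) .
          have "h k l = h k' l'" using hf[OF that] e by simp
          moreover have "C k l $ 1 = C k' l' $ 1" "C k l $ 2 = C k' l' $ 2"
            using e c1[of k l] c1[of k' l'] c2[of k l] c2[of k' l'] by auto
          ultimately show ?thesis by (simp add: vec_eq_iff forall_3 h_def)
        qed
        then have "C k l = C 0 0" if "k < m" "l < n" for k l
          using grid_conn[of m n C k l] that by blast
        then show False using not_all_equal_const[of m n C] na by blast
      qed
    next
      show "christoffel_dual c (metric_dual F) m n" unfolding christoffel_dual_def
      proof (intro allI impI, elim conjE)
        fix k l assume k: "Suc k < m" and l: "Suc l < n"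
        let ?V = "F (Suc k) (Suc l)"
        have kk: "k < m" and ll: "l < n" using k l by auto
        have a: "adjacent (k, l) (Suc k, l)" "adjacent (Suc k, l) (k, l)"
          "adjacent (Suc k, l) (Suc k, Suc l)" "adjacent (Suc k, Suc l) (Suc k, l)"
          "adjacent (Suc k, Suc l) (k, Suc l)" "adjacent (k, Suc l) (Suc k, Suc l)"
          "adjacent (k, Suc l) (k, l)" "adjacent (k, l) (k, Suc l)" by (simp_all add: adjacent_def)
        have v1: "?V \<in> face_plane F k l" "?V \<in> face_plane F (Suc k) l"
          "?V \<in> face_plane F (Suc k) (Suc l)" "?V \<in> face_plane F k (Suc l)"
          using face_verts[of F k l] face_verts[of F "Suc k" l] face_verts[of F "Suc k" "Suc l"]
            face_verts[of F k "Suc l"] by simp_all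
        have v10: "c (Suc k) l $ 3 - c k l $ 3 = ?V$1 * (c (Suc k) l $ 1 - c k l $ 1) + ?V$2 * (c (Suc k) l $ 2 - c k l $ 2)"
          using phi1[OF k ll] unfolding c1 c2 c3 w1_def om_def by (simp add: algebra_simps)
        have v21: "c (Suc k) (Suc l) $ 3 - c (Suc k) l $ 3 = ?V$1 * (c (Suc k) (Suc l) $ 1 - c (Suc k) l $ 1) + ?V$2 * (c (Suc k) (Suc l) $ 2 - c (Suc k) l $ 2)"
          using phi2[OF k l] W2[OF k l] unfolding c1 c2 c3 om_def by (simp add: algebra_simps)
        have v32: "c k (Suc l) $ 3 - c (Suc k) (Suc l) $ 3 = ?V$1 * (c k (Suc l) $ 1 - c (Suc k) (Suc l) $ 1) + ?V$2 * (c k (Suc l) $ 2 - c (Suc k) (Suc l) $ 2)"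
          using phi1[OF k l] W1[OF k l] unfolding c1 c2 c3 om_def by (simp add: algebra_simps)
        show "dual_quads (c k l) (c (Suc k) l) (c (Suc k) (Suc l)) (c k (Suc l))
             (?p k l) (?p (Suc k) l) (?p (Suc k) (Suc l)) (?p k (Suc l))"
          apply (rule square_lemma[where hA = "h k l" and hB = "h (Suc k) l" and hC = "h (Suc k) (Suc l)" and hD = "h k (Suc l)" and V = ?V])
          using hf[OF kk ll k ll a(1)] hf[OF k ll kk ll a(2)] hf[OF k ll k l a(3)] hf[OF k l k ll a(4)]
            hf[OF k l kk l a(5)] hf[OF kk l k l a(6)] hf[OF kk l kk ll a(7)] hf[OF kk ll kk l a(8)]
            Vp[OF kk ll v1(1)] Vp[OF k ll v1(2)] Vp[OF k l v1(3)] Vp[OF kk l v1(4)] v10 v21 v32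
          by simp_all
      qed
    next
      fix k l k' l' assume "k < m \<and> l < n \<and> k' < m \<and> l' < n \<and> adjacent (k, l) (k', l')"
      then show "h k l - h k' l' = (c k l $ 1 - c k' l' $ 1) * (metric_dual F k l $ 2)
                            - (c k l $ 2 - c k' l' $ 2) * (metric_dual F k l $ 1)" using hf by blast
    qed
  next
    assume "\<exists>c h. (\<forall>k l. k < m \<and> l < n \<longrightarrow> C k l = vector [- (c k l $ 2), c k l $ 1, h k l]) \<and>
       not_all_equal c m n \<and>
       christoffel_dual c (metric_dual F) m n \<and>
       (\<forall>k l k' l'. k < m \<and> l < n \<and> k' < m \<and> l' < n \<and> adjacent (k, l) (k', l') \<longrightarrow>
          h k l - h k' l' = (c k l $ 1 - c k' l' $ 1) * (metric_dual F k l $ 2)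
                            - (c k l $ 2 - c k' l' $ 2) * (metric_dual F k l $ 1))"
    then obtain c h where Cc: "\<And>k l. k < m \<Longrightarrow> l < n \<Longrightarrow> C k l = vector [- (c k l $ 2), c k l $ 1, h k l]"
      and nac: "not_all_equal c m n" and cd: "christoffel_dual c (metric_dual F) m n"
      and hf: "\<And>k l k' l'. k < m \<Longrightarrow> l < n \<Longrightarrow> k' < m \<Longrightarrow> l' < n \<Longrightarrow> adjacent (k, l) (k', l') \<Longrightarrow>
          h k l - h k' l' = (c k l $ 1 - c k' l' $ 1) * (metric_dual F k l $ 2)
                            - (c k l $ 2 - c k' l' $ 2) * (metric_dual F k l $ 1)"
      by blast
    have C1: "C k l $ 1 = - (c k l $ 2)" and C2: "C k l $ 2 = c k l $ 1" and C3: "C k l $ 3 = h k l"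
      if "k < m" "l < n" for k l using Cc[OF that] by simp_all
    have XN: "(C k l - C k' l') \<bullet> nrm (?p k l) = 0"
      if "k < m" "l < n" "k' < m" "l' < n" "adjacent (k, l) (k', l')" for k l k' l'
      using hf[OF that] unfolding nrm_def inner3
      by (simp add: C1[OF that(1,2)] C2[OF that(1,2)] C3[OF that(1,2)] C1[OF that(3,4)] C2[OF that(3,4)] C3[OF that(3,4)] algebra_simps)
    show "reciprocal_parallel F m n C" unfolding RP_iff[of F m n C]
    proof (rule conjI)
      show "not_all_equal C m n"
      proof (rule ccontr)
        assume nC: "\<not> not_all_equal C m n"
        have Ceq: "C k l = C k' l'" if "k < m" "l < n" "k' < m" "l' < n" for k l k' l'
          using nC that unfolding not_all_equal_def by blast
        have "c k l = c k' l'" if r: "k < m" "l < n" "k' < m" "l' < n" and adj: "adjacent (k, l) (k', l')" for k l k' l'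
        proof -
          have e1: "c k l $ 1 = c k' l' $ 1" using C2[OF r(1,2)] C2[OF r(3,4)] Ceq[OF r] by simp
          have e2: "c k l $ 2 = c k' l' $ 2" using C1[OF r(1,2)] C1[OF r(3,4)] Ceq[OF r] by simp
          have cc: "cross3 (c k l - c k' l') (?p k l - ?p k' l') = 0" using CD_edge[OF cd m2 n2 r adj] .
          have xy: "?p k l $ 1 \<noteq> ?p k' l' $ 1 \<or> ?p k l $ 2 \<noteq> ?p k' l' $ 2"
            using EO[OF r adj] unfolding edge_ok_def by blast
          have "(c k l $ 3 - c k' l' $ 3) * (?p k l $ 2 - ?p k' l' $ 2) = 0"
               "(c k l $ 3 - c k' l' $ 3) * (?p k l $ 1 - ?p k' l' $ 1) = 0"
            using cc e1 e2 unfolding vec_eq_iff forall_3 cross_components by (simp_all add: algebra_simps)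
          then have e3: "c k l $ 3 = c k' l' $ 3" using xy by auto
          show ?thesis using e1 e2 e3 by (simp add: vec_eq_iff forall_3)
        qed
        then have "c k l = c 0 0" if "k < m" "l < n" for k l
          using grid_conn[of m n c k l] that by blast
        then show False using not_all_equal_const[of m n c] nac by blast
      qed
    next
      show "\<forall>k l k' l'. k < m \<and> l < n \<and> k' < m \<and> l' < n \<and> adjacent (k, l) (k', l') \<longrightarrow>
        cross3 (C k l - C k' l') (Ue F k l k' l') = 0"
      proof (intro allI impI, elim conjE)
      fix k l k' l' assume r: "k < m" "l < n" "k' < m" "l' < n" and adj: "adjacent (k, l) (k', l')"
      have eo: "edge_ok (Ue F k l k' l') (?p k l) (?p k' l')" using EO[OF r adj] .
      define w where "w = cross3 (nrm (?p k l)) (nrm (?p k' l'))"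
      have w0: "w \<noteq> 0" using eo nrm_cross_nz unfolding edge_ok_def w_def by blast
      have x1: "(C k l - C k' l') \<bullet> nrm (?p k l) = 0" using XN[OF r adj] .
      have "(C k' l' - C k l) \<bullet> nrm (?p k' l') = 0" using XN[OF r(3,4,1,2) adjacent_sym[OF adj]] .
      then have x2: "(C k l - C k' l') \<bullet> nrm (?p k' l') = 0" by (simp add: inner_diff_left)
      have "cross3 (C k l - C k' l') w = 0" unfolding w_def using perp2[OF x1 x2] .
      moreover have "cross3 (Ue F k l k' l') w = 0" unfolding w_def
        using eo unfolding edge_ok_def by (intro perp2) (simp_all add: inner_commute)
      ultimately show "cross3 (C k l - C k' l') (Ue F k l k' l') = 0" using par_trans w0 by blast
      qed
    qed
  qed
qed

end
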